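(* Consider a spherically symmetric spacetime in the setting described in the context, belonging to Case 1 (that is, $\partial_v r_-=0$, so $x_-(v)\equiv 0$). Then the spacetime is either of Type 1 or of Type 2, i.e. the quantities $U^{(\pm)}$ satisfy $-1<U^{(+)}_0<U^{(+)}_\infty\le U^{(-)}_0<+1$, with equality $U^{(+)}_\infty=U^{(-)}_0$ (Type 1) or strict inequality $U^{(+)}_\infty<U^{(-)}_0$ (Type 2).
   Context: Consider a spherically symmetric spacetime with metric $ds^2=-f(v,r)A(v,r)^2dv^2+2A(v,r)\,dr\,dv+r^2d\Omega^2$, where $d\Omega^2$ is the unit 2-sphere metric, $A>0$, $\lim_{r\to\infty}f=\lim_{r\to\infty}A=1$, and $f(v,0)=1$, $\partial_rf(v,0)=0$, $\partial_rA(v,0)=0$. It is assumed that $f(v,\cdot)=0$ has exactly two roots $r_+(v)>r_-(v)$ (the outer and inner apparent horizons, AHs), so $f(v,r)=F(v,r)(r-r_+(v))(r-r_-(v))$ with $F>0$; set $h=AF>0$. Standing assumptions: (1) $\partial_v r_+<0$; (2) $\lim_{v\to\infty}r_\pm(v)=r_c$; (3) the sign of $\partial_v r_-$ never changes; (4) the limits as $v\to\infty$ of $A,F,h$ behave as analytic functions of $r$, so all $\partial_r^n h(v,r)$ converge to finite values as $v\to\infty$; $h_c:=\lim_{v\to\infty}h(v,r_c)$. Put $x=r-r_c$, $x_\pm(v)=r_\pm(v)-r_c$ (so $x_\pm\to 0$), and regard $h$ as a function of $(v,x)$. Radially outgoing null geodesics are the solutions of $dx/dv=\tfrac12 h(v,x)(x-x_+(v))(x-x_-(v))$.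 Compactified outgoing null coordinate: fix $v_0$ and work in $v\ge v_0$; set $U=\frac{2}{\pi}\arctan((v-v_0)/r_c)$ on $\{r=0,\,v\ge v_0\}$ and $U=-\frac{2}{\pi}\arctan(r/r_c)$ on $\{v=v_0,\,r>0\}$, and extend $U$ by requiring it to be constant along each radially outgoing null geodesic; $U$ ranges over $[-1,1]$ ($U=+1$ corresponds to $v=\infty$ on $r=0$, $U=-1$ to $r=\infty$ on $v=v_0$). The outer and inner AHs lie at $U=U^{(\pm)}(v)$; $U^{(\pm)}_0=U^{(\pm)}(v_0)$ and $U^{(\pm)}_\infty=\lim_{v\to\infty}U^{(\pm)}(v)$. A Case 1 spacetime is of Type 1 if $U^{(+)}_\infty=U^{(-)}_0$ and of Type 2 if $U^{(+)}_\infty<U^{(-)}_0$. *)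

theory Defs
  imports "HOL-Analysis.Analysis"
begin

definition f_of :: "(real \<Rightarrow> real \<Rightarrow> real) \<Rightarrow> (real \<Rightarrow> real) \<Rightarrow> (real \<Rightarrow> real)
    \<Rightarrow> real \<Rightarrow> real \<Rightarrow> real" where
  "f_of F rp rm v r = F v r * (r - rp v) * (r - rm v)"

definition C1_on2 :: "(real \<Rightarrow> real \<Rightarrow> real) \<Rightarrow> (real \<times> real) set \<Rightarrow> bool" where
  "C1_on2 g S \<longleftrightarrow> (\<exists>gv gr. continuous_on S gv \<and> continuous_on S gr \<and>
      (\<forall>p\<in>S. ((\<lambda>q. g (fst q) (snd q)) has_derivative
                 (\<lambda>d. gv p * fst d + gr p * snd d)) (at p)))"

definition real_analytic_on :: "(real \<Rightarrow> real) \<Rightarrow> real set \<Rightarrow> bool" where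
  "real_analytic_on g T \<longleftrightarrow> (\<forall>r0\<in>T. \<exists>\<delta>>0. \<exists>c::nat \<Rightarrow> real.
      \<forall>r. \<bar>r - r0\<bar> < \<delta> \<longrightarrow> (\<lambda>n. c n * (r - r0) ^ n) sums g r)"

definition outgoing_null :: "(real \<Rightarrow> real \<Rightarrow> real) \<Rightarrow> (real \<Rightarrow> real \<Rightarrow> real)
    \<Rightarrow> (real \<Rightarrow> real) \<Rightarrow> real \<Rightarrow> real \<Rightarrow> bool" where
  "outgoing_null A f \<gamma> a b \<longleftrightarrow> a \<le> b \<and>
     (\<forall>t\<in>{a..b}. (\<gamma> has_real_derivative (A t (\<gamma> t) * f t (\<gamma> t) / 2)) (at t within {a..b}))"

text \<open>Compactified outgoing null coordinate U at (v,r), v \<ge> v0, r \<ge> 0: follow the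
  outgoing null geodesic through (v,r) into the past until it either reaches the
  centre r = 0 at some time a \<ge> v0 (U = 2/pi arctan((a-v0)/rc)) or reaches v = v0 at
  some radius r0 > 0 (U = -2/pi arctan(r0/rc)).\<close>
definition Ucoord :: "(real \<Rightarrow> real \<Rightarrow> real) \<Rightarrow> (real \<Rightarrow> real \<Rightarrow> real) \<Rightarrow> real \<Rightarrow> real
    \<Rightarrow> real \<Rightarrow> real \<Rightarrow> real" where
  "Ucoord A f rc v0 v r = (THE u. \<exists>\<gamma> a. v0 \<le> a \<and> outgoing_null A f \<gamma> a v \<and> \<gamma> v = r \<and>
      (\<forall>t\<in>{a<..v}. \<gamma> t > 0) \<and>
      ((\<gamma> a = 0 \<and> u = 2 / pi * arctan ((a - v0) / rc)) \<or>
       (a = v0 \<and> \<gamma> v0 > 0 \<and> u = - 2 / pi * arctan (\<gamma> v0 / rc))))"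

end

theory Submission
  imports Defs "HOL-Analysis.Analysis"
begin


lemma compact_bound:
  fixes g :: "'a \<Rightarrow> real"
  assumes "compact (g ` K)"
  obtains B where "\<And>q. q \<in> K \<Longrightarrow> \<bar>g q\<bar> \<le> B"
proof -
  have "bounded (g ` K)" by (rule compact_imp_bounded[OF assms])
  then obtain B where "\<forall>x\<in>g ` K. norm x \<le> B" unfolding bounded_iff by blast
  then show ?thesis using that by auto
qed

lemma deriv_nonpos_mono:
  fixes f :: "real \<Rightarrow> real"
  assumes "a \<le> b" and d: "\<And>x. x \<in> {a..b} \<Longrightarrow> (f has_real_derivative f' x) (at x within {a..b})"
    and n: "\<And>x. x \<in> {a..b} \<Longrightarrow> f' x \<le> 0"
  shows "f b \<le> f a"
proof -
  have "\<And>x. a \<le> x \<Longrightarrow> x \<le> b \<Longrightarrow> (f has_derivative (\<lambda>h. f' x * h)) (at x within {a..b})"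
    using d by (simp add: has_field_derivative_def)
  from mvt_very_simple[OF assms(1) this] obtain x where "x \<in> {a..b}" "f b - f a = f' x * (b - a)"
    by auto
  moreover have "f' x * (b - a) \<le> 0" using n[OF \<open>x \<in> {a..b}\<close>] assms(1) by (intro mult_nonpos_nonneg) auto
  ultimately show ?thesis by linarith
qed

lemma ode_unique:
  fixes ya yb :: "real \<Rightarrow> real" and G :: "real \<Rightarrow> real \<Rightarrow> real"
  assumes d1: "\<And>t. t \<in> {a..b} \<Longrightarrow> (ya has_real_derivative G t (ya t)) (at t within {a..b})"
    and d2: "\<And>t. t \<in> {a..b} \<Longrightarrow> (yb has_real_derivative G t (yb t)) (at t within {a..b})"
    and I1: "\<And>t. t \<in> {a..b} \<Longrightarrow> ya t \<in> I" and I2: "\<And>t. t \<in> {a..b} \<Longrightarrow> yb t \<in> I"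
    and lip: "\<And>t r s. t \<in> {a..b} \<Longrightarrow> r \<in> I \<Longrightarrow> s \<in> I \<Longrightarrow> \<bar>G t r - G t s\<bar> \<le> L * \<bar>r - s\<bar>"
    and tt: "tt \<in> {a..b}" "ya tt = yb tt"
    and t: "t \<in> {a..b}"
  shows "ya t = yb t"
proof -
  define K where "K = 2 * \<bar>L\<bar>"
  have K: "K \<ge> 0" unfolding K_def by simp
  define P where "P x = 2 * (ya x - yb x) * (G x (ya x) - G x (yb x))" for x
  define Q where "Q x = (ya x - yb x)^2" for x
  have bnd: "\<bar>P x\<bar> \<le> K * Q x" if x: "x \<in> {a..b}" for x
  proof -
    have l: "\<bar>G x (ya x) - G x (yb x)\<bar> \<le> \<bar>L\<bar> * \<bar>ya x - yb x\<bar>"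
    proof -
      have "L * \<bar>ya x - yb x\<bar> \<le> \<bar>L\<bar> * \<bar>ya x - yb x\<bar>" by (intro mult_right_mono) auto
      then show ?thesis using lip[OF x I1[OF x] I2[OF x]] by linarith
    qed
    have "\<bar>P x\<bar> = 2 * \<bar>ya x - yb x\<bar> * \<bar>G x (ya x) - G x (yb x)\<bar>"
      unfolding P_def by (simp only: abs_mult)
    also have "\<dots> \<le> 2 * \<bar>ya x - yb x\<bar> * (\<bar>L\<bar> * \<bar>ya x - yb x\<bar>)"
      by (intro mult_left_mono l) auto
    also have "\<dots> = K * Q x" unfolding K_def Q_def
      by (simp add: power2_eq_square abs_mult_self_eq)
    finally show ?thesis .
  qed
  have dQ: "(Q has_real_derivative P x) (at x within {a..b})" if x: "x \<in> {a..b}" for x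
    unfolding Q_def P_def
    by (rule derivative_eq_intros refl d1[OF x] d2[OF x] | simp)+
  show ?thesis
  proof (cases "tt \<le> t")
    case True
    define psi where "psi s = Q s * exp (- (K * s))" for s
    have sub: "{tt..t} \<subseteq> {a..b}" using tt t by auto
    have "psi t \<le> psi tt"
    proof (rule deriv_nonpos_mono[OF True])
      fix x assume x: "x \<in> {tt..t}"
      then have xab: "x \<in> {a..b}" using sub by auto
      have "(psi has_real_derivative (P x * exp (- (K * x)) + Q x * (exp (- (K * x)) * (- K)))) (at x within {a..b})"
        unfolding psi_def
        by (rule derivative_eq_intros refl dQ[OF xab] | simp)+
      then show "(psi has_real_derivative (P x * exp (- (K * x)) + Q x * (exp (- (K * x)) * (- K)))) (at x within {tt..t})"
        by (rule DERIV_subset[OF _ sub])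
      have "P x * exp (- (K * x)) \<le> K * Q x * exp (- (K * x))"
        using bnd[OF xab] by (intro mult_right_mono) auto
      then show "P x * exp (- (K * x)) + Q x * (exp (- (K * x)) * (- K)) \<le> 0"
        by (simp add: algebra_simps)
    qed
    moreover have "psi tt = 0" using tt by (simp add: psi_def Q_def)
    ultimately have "Q t * exp (- (K * t)) \<le> 0" by (simp add: psi_def)
    then have "Q t \<le> 0" by (simp add: mult_le_0_iff)
    then show ?thesis unfolding Q_def by simp
  next
    case False
    then have le: "t \<le> tt" by simp
    define psi where "psi s = - (Q s * exp (K * s))" for s
    have sub: "{t..tt} \<subseteq> {a..b}" using tt t by auto
    have "psi tt \<le> psi t"
    proof (rule deriv_nonpos_mono[OF le])
      fix x assume x: "x \<in> {t..tt}"
      then have xab: "x \<in> {a..b}" using sub by auto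
      have "(psi has_real_derivative - (P x * exp (K * x) + Q x * (exp (K * x) * K))) (at x within {a..b})"
        unfolding psi_def
        by (rule derivative_eq_intros refl dQ[OF xab] | simp)+
      then show "(psi has_real_derivative - (P x * exp (K * x) + Q x * (exp (K * x) * K))) (at x within {t..tt})"
        by (rule DERIV_subset[OF _ sub])
      have "- P x * exp (K * x) \<le> K * Q x * exp (K * x)"
        using bnd[OF xab] by (intro mult_right_mono) auto
      then show "- (P x * exp (K * x) + Q x * (exp (K * x) * K)) \<le> 0"
        by (simp add: algebra_simps)
    qed
    moreover have "psi tt = 0" using tt by (simp add: psi_def Q_def)
    ultimately have "Q t * exp (K * t) \<le> 0" by (simp add: psi_def)
    then have "Q t \<le> 0" by (simp add: mult_le_0_iff)
    then show ?thesis unfolding Q_def by simp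
  qed
qed



lemma C1_cont:
  assumes "C1_on2 \<phi> S"
  shows "continuous_on S (\<lambda>q. \<phi> (fst q) (snd q))"
proof -
  obtain gv gr where d: "\<forall>p\<in>S. ((\<lambda>q. \<phi> (fst q) (snd q)) has_derivative
                 (\<lambda>d. gv p * fst d + gr p * snd d)) (at p)"
    using assms unfolding C1_on2_def by blast
  show ?thesis
    by (rule continuous_at_imp_continuous_on) (use d has_derivative_continuous in blast)
qed

lemma C1_lip:
  assumes C: "C1_on2 \<phi> S" and K: "{a..b} \<times> {m..M} \<subseteq> S"
  shows "\<exists>L. \<forall>t\<in>{a..b}. \<forall>r\<in>{m..M}. \<forall>s\<in>{m..M}. \<bar>\<phi> t r - \<phi> t s\<bar> \<le> L * \<bar>r - s\<bar>"
proof -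
  obtain gv gr where cgr: "continuous_on S gr" and d: "\<forall>p\<in>S. ((\<lambda>q. \<phi> (fst q) (snd q)) has_derivative
                 (\<lambda>d. gv p * fst d + gr p * snd d)) (at p)"
    using C unfolding C1_on2_def by blast
  have "compact (gr ` ({a..b} \<times> {m..M}))"
    by (intro compact_continuous_image continuous_on_subset[OF cgr K] compact_Times compact_Icc)
  then obtain B where B: "\<And>q. q \<in> {a..b} \<times> {m..M} \<Longrightarrow> \<bar>gr q\<bar> \<le> B"
    by (rule compact_bound) blast
  have D: "((\<lambda>r. \<phi> t r) has_real_derivative gr (t, r)) (at r)" if "(t, r) \<in> S" for t r
  proof -
    have d1: "((\<lambda>r. (t, r)) has_derivative (\<lambda>h. (0, h))) (at r)"
      by (intro derivative_eq_intros) auto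
    have "(((\<lambda>q. \<phi> (fst q) (snd q)) \<circ> (\<lambda>r. (t, r))) has_derivative
        ((\<lambda>d. gv (t, r) * fst d + gr (t, r) * snd d) \<circ> (\<lambda>h. (0, h)))) (at r)"
      by (rule diff_chain_at[OF d1]) (use d that in auto)
    then have "((\<lambda>r. \<phi> t r) has_derivative (\<lambda>h. gr (t, r) * h)) (at r)"
      by (simp add: o_def)
    then show ?thesis by (simp add: has_field_derivative_def)
  qed
  have main: "\<phi> t s - \<phi> t r \<le> B * (s - r) \<and> \<phi> t r - \<phi> t s \<le> B * (s - r)"
    if t: "t \<in> {a..b}" and r: "r \<in> {m..M}" and s: "s \<in> {m..M}" and rs: "r < s" for t r s
  proof -
    have "\<And>x. r \<le> x \<Longrightarrow> x \<le> s \<Longrightarrow> ((\<lambda>r. \<phi> t r) has_real_derivative gr (t, x)) (at x)"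
      using D K t r s by (intro D) auto
    from MVT2[OF rs this] obtain z where z: "r < z" "z < s" "\<phi> t s - \<phi> t r = (s - r) * gr (t, z)"
      by blast
    have "\<bar>gr (t, z)\<bar> \<le> B" using B t r s z by auto
    then have "\<bar>(s - r) * gr (t, z)\<bar> \<le> (s - r) * B" using rs
      by (simp add: abs_mult mult_left_mono)
    then show ?thesis using z(3) by (auto simp: algebra_simps abs_le_iff)
  qed
  show ?thesis
  proof (intro exI[of _ B] ballI)
    fix t r s assume t: "t \<in> {a..b}" and r: "r \<in> {m..M}" and s: "s \<in> {m..M}"
    consider "r < s" | "r = s" | "s < r" by linarith
    then show "\<bar>\<phi> t r - \<phi> t s\<bar> \<le> B * \<bar>r - s\<bar>"
    proof cases
      case 1 then show ?thesis using main[OF t r s] by (auto simp: abs_le_iff)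
    next
      case 2 then show ?thesis by simp
    next
      case 3 then show ?thesis using main[OF t s r] by (auto simp: abs_le_iff)
    qed
  qed
qed

definition LB :: "(real \<Rightarrow> real \<Rightarrow> real) \<Rightarrow> real \<Rightarrow> real \<Rightarrow> real \<Rightarrow> real \<Rightarrow> bool" where
  "LB \<phi> a b m M \<longleftrightarrow> (\<exists>L B. \<forall>t\<in>{a..b}. \<forall>r\<in>{m..M}. \<forall>s\<in>{m..M}.
      \<bar>\<phi> t r - \<phi> t s\<bar> \<le> L * \<bar>r - s\<bar> \<and> \<bar>\<phi> t r\<bar> \<le> B)"

lemma LB_mult:
  assumes "LB \<phi> a b m M" "LB \<psi> a b m M"
  shows "LB (\<lambda>t r. \<phi> t r * \<psi> t r) a b m M"
proof -
  obtain L1 B1 where 1: "\<forall>t\<in>{a..b}. \<forall>r\<in>{m..M}. \<forall>s\<in>{m..M}.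
      \<bar>\<phi> t r - \<phi> t s\<bar> \<le> L1 * \<bar>r - s\<bar> \<and> \<bar>\<phi> t r\<bar> \<le> B1"
    using assms(1) unfolding LB_def by blast
  obtain L2 B2 where 2: "\<forall>t\<in>{a..b}. \<forall>r\<in>{m..M}. \<forall>s\<in>{m..M}.
      \<bar>\<psi> t r - \<psi> t s\<bar> \<le> L2 * \<bar>r - s\<bar> \<and> \<bar>\<psi> t r\<bar> \<le> B2"
    using assms(2) unfolding LB_def by blast
  show ?thesis unfolding LB_def
  proof (rule exI[of _ "\<bar>B1\<bar> * \<bar>L2\<bar> + \<bar>B2\<bar> * \<bar>L1\<bar>"], rule exI[of _ "\<bar>B1\<bar> * \<bar>B2\<bar>"], intro ballI conjI)
    fix t r s assume t: "t \<in> {a..b}" and r: "r \<in> {m..M}" and s: "s \<in> {m..M}"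
    have x1: "\<bar>\<phi> t r - \<phi> t s\<bar> \<le> L1 * \<bar>r - s\<bar>" "\<bar>\<phi> t r\<bar> \<le> B1"
      using 1 t r s by blast+
    have x2: "\<bar>\<psi> t r - \<psi> t s\<bar> \<le> L2 * \<bar>r - s\<bar>" "\<bar>\<psi> t r\<bar> \<le> B2" "\<bar>\<psi> t s\<bar> \<le> B2"
      using 2 t r s by blast+
    have "L1 * \<bar>r - s\<bar> \<le> \<bar>L1\<bar> * \<bar>r - s\<bar>" "L2 * \<bar>r - s\<bar> \<le> \<bar>L2\<bar> * \<bar>r - s\<bar>"
      by (intro mult_right_mono; simp)+
    then have a1: "\<bar>\<phi> t r - \<phi> t s\<bar> \<le> \<bar>L1\<bar> * \<bar>r - s\<bar>"
      and a2: "\<bar>\<psi> t r - \<psi> t s\<bar> \<le> \<bar>L2\<bar> * \<bar>r - s\<bar>" using x1 x2 by linarith+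
    have b1: "\<bar>\<phi> t r\<bar> \<le> \<bar>B1\<bar>" and b2: "\<bar>\<psi> t s\<bar> \<le> \<bar>B2\<bar>" and b2': "\<bar>\<psi> t r\<bar> \<le> \<bar>B2\<bar>"
      using x1 x2 by linarith+
    have "\<bar>\<phi> t r * \<psi> t r - \<phi> t s * \<psi> t s\<bar>
        = \<bar>\<phi> t r * (\<psi> t r - \<psi> t s) + \<psi> t s * (\<phi> t r - \<phi> t s)\<bar>"
      by (simp add: algebra_simps)
    also have "\<dots> \<le> \<bar>\<phi> t r\<bar> * \<bar>\<psi> t r - \<psi> t s\<bar> + \<bar>\<psi> t s\<bar> * \<bar>\<phi> t r - \<phi> t s\<bar>"
      unfolding abs_mult[symmetric] by (rule abs_triangle_ineq)
    also have "\<dots> \<le> \<bar>B1\<bar> * (\<bar>L2\<bar> * \<bar>r - s\<bar>) + \<bar>B2\<bar> * (\<bar>L1\<bar> * \<bar>r - s\<bar>)"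
      by (intro add_mono mult_mono a1 a2 b1 b2) auto
    also have "\<dots> = (\<bar>B1\<bar> * \<bar>L2\<bar> + \<bar>B2\<bar> * \<bar>L1\<bar>) * \<bar>r - s\<bar>" by (simp add: algebra_simps)
    finally show "\<bar>\<phi> t r * \<psi> t r - \<phi> t s * \<psi> t s\<bar> \<le> (\<bar>B1\<bar> * \<bar>L2\<bar> + \<bar>B2\<bar> * \<bar>L1\<bar>) * \<bar>r - s\<bar>" .
    show "\<bar>\<phi> t r * \<psi> t r\<bar> \<le> \<bar>B1\<bar> * \<bar>B2\<bar>"
      unfolding abs_mult by (intro mult_mono b1 b2') auto
  qed
qed

lemma LB_div2:
  assumes "LB \<phi> a b m M"
  shows "LB (\<lambda>t r. \<phi> t r / 2) a b m M"
proof -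
  obtain L1 B1 where 1: "\<forall>t\<in>{a..b}. \<forall>r\<in>{m..M}. \<forall>s\<in>{m..M}.
      \<bar>\<phi> t r - \<phi> t s\<bar> \<le> L1 * \<bar>r - s\<bar> \<and> \<bar>\<phi> t r\<bar> \<le> B1"
    using assms(1) unfolding LB_def by blast
  show ?thesis unfolding LB_def
  proof (rule exI[of _ "L1 / 2"], rule exI[of _ "B1 / 2"], intro ballI conjI)
    fix t r s assume t: "t \<in> {a..b}" and r: "r \<in> {m..M}" and s: "s \<in> {m..M}"
    have "\<bar>\<phi> t r - \<phi> t s\<bar> \<le> L1 * \<bar>r - s\<bar>" "\<bar>\<phi> t r\<bar> \<le> B1" using 1 t r s by auto
    then show "\<bar>\<phi> t r / 2 - \<phi> t s / 2\<bar> \<le> L1 / 2 * \<bar>r - s\<bar>" "\<bar>\<phi> t r / 2\<bar> \<le> B1 / 2"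
      by (auto simp: diff_divide_distrib[symmetric])
  qed
qed

lemma LB_C1:
  assumes C: "C1_on2 \<phi> S" and K: "{a..b} \<times> {m..M} \<subseteq> S"
  shows "LB \<phi> a b m M"
proof -
  obtain L where L: "\<forall>t\<in>{a..b}. \<forall>r\<in>{m..M}. \<forall>s\<in>{m..M}. \<bar>\<phi> t r - \<phi> t s\<bar> \<le> L * \<bar>r - s\<bar>"
    using C1_lip[OF C K] by blast
  have "compact ((\<lambda>q. \<phi> (fst q) (snd q)) ` ({a..b} \<times> {m..M}))"
    by (intro compact_continuous_image continuous_on_subset[OF C1_cont[OF C] K] compact_Times compact_Icc)
  then obtain B where B: "\<And>q. q \<in> {a..b} \<times> {m..M} \<Longrightarrow> \<bar>\<phi> (fst q) (snd q)\<bar> \<le> B"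
    by (rule compact_bound) blast
  show ?thesis unfolding LB_def
  proof (rule exI[of _ L], rule exI[of _ B], intro ballI conjI)
    fix t r s assume t: "t \<in> {a..b}" and r: "r \<in> {m..M}" and s: "s \<in> {m..M}"
    show "\<bar>\<phi> t r - \<phi> t s\<bar> \<le> L * \<bar>r - s\<bar>" using L t r s by blast
    show "\<bar>\<phi> t r\<bar> \<le> B" using B[of "(t, r)"] t r by simp
  qed
qed

lemma LB_lin:
  assumes q: "continuous_on {a..b} q"
  shows "LB (\<lambda>t r. r - q t) a b m M"
proof -
  have "compact (q ` {a..b})" by (intro compact_continuous_image q compact_Icc)
  then obtain B where B: "\<And>t. t \<in> {a..b} \<Longrightarrow> \<bar>q t\<bar> \<le> B"
    by (rule compact_bound) blast
  show ?thesis unfolding LB_def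
  proof (rule exI[of _ 1], rule exI[of _ "\<bar>m\<bar> + \<bar>M\<bar> + B"], intro ballI conjI)
    fix t r s assume t: "t \<in> {a..b}" and r: "r \<in> {m..M}" and s: "s \<in> {m..M}"
    show "\<bar>r - q t - (s - q t)\<bar> \<le> 1 * \<bar>r - s\<bar>" by simp
    show "\<bar>r - q t\<bar> \<le> \<bar>m\<bar> + \<bar>M\<bar> + B" using B[OF t] r by (auto simp: abs_le_iff)
  qed
qed

lemma deriv_cont_fst:
  assumes "\<And>t. \<exists>d. (g has_real_derivative d) (at t)"
  shows "continuous_on T (\<lambda>q. g (fst q))"
proof -
  have "continuous_on UNIV g"
    by (rule continuous_at_imp_continuous_on) (use assms DERIV_isCont in blast)
  then show ?thesis
    by (rule continuous_on_compose2[of UNIV g T fst]) (auto intro: continuous_intros)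
qed

lemma deriv_cont:
  assumes "\<And>t. \<exists>d. (g has_real_derivative d) (at t)"
  shows "continuous_on T g"
  by (rule continuous_at_imp_continuous_on) (use assms DERIV_isCont in blast)



lemma below_curve:
  fixes y p :: "real \<Rightarrow> real" and G :: "real \<Rightarrow> real \<Rightarrow> real"
  assumes d: "\<And>t. t \<in> {a..b} \<Longrightarrow> (y has_real_derivative G t (y t)) (at t within {a..b})"
    and dp: "\<And>t. \<exists>d. (p has_real_derivative d) (at t) \<and> d < 0"
    and yb: "y b = p b"
    and z: "\<And>t. t \<in> {a..b} \<Longrightarrow> y t = p t \<Longrightarrow> G t (y t) = 0"
    and t0: "t0 \<in> {a..<b}"
  shows "y t0 < p t0"
proof (rule ccontr)
  assume "\<not> y t0 < p t0"
  then have D0: "0 \<le> y t0 - p t0" by simp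
  define D where "D s = y s - p s" for s
  obtain pd where pd: "\<And>t. (p has_real_derivative pd t) (at t)" "\<And>t. pd t < 0"
    using dp by metis
  have dD0: "(D has_real_derivative (G s (y s) - pd s)) (at s within {a..b})"
    if s: "s \<in> {a..b}" for s
    unfolding D_def by (intro derivative_intros d[OF s] has_field_derivative_at_within[OF pd(1)])
  have dD: "\<exists>l>0. (D has_real_derivative l) (at s within {a..b})"
    if s: "s \<in> {a..b}" and Ds: "D s = 0" for s
  proof -
    have "G s (y s) = 0" using z[OF s] Ds by (simp add: D_def)
    then show ?thesis using dD0[OF s] pd(2)[of s] by (intro exI[of _ "- pd s"]) auto
  qed
  have contD: "continuous_on {a..b} D"
    using dD0 by (rule DERIV_continuous_on)
  have ab: "a < b" using t0 by auto
  have Db: "D b = 0" using yb by (simp add: D_def)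
  obtain l where l: "l > 0" "(D has_real_derivative l) (at b within {a..b})"
    using dD[OF _ Db] ab by auto
  from has_real_derivative_pos_inc_left[OF l(2) l(1)] obtain \<delta> where
    \<delta>: "\<delta> > 0" "\<And>h. h > 0 \<Longrightarrow> b - h \<in> {a..b} \<Longrightarrow> h < \<delta> \<Longrightarrow> D (b - h) < D b" by blast
  have neg_near: "D s < 0" if "s \<in> {a..<b}" "b - s < \<delta>" for s
    using \<delta>(2)[of "b - s"] that Db by auto
  have t0le: "t0 \<le> b - \<delta>"
  proof (rule ccontr)
    assume "\<not> t0 \<le> b - \<delta>"
    then have "D t0 < 0" using neg_near[OF t0] by auto
    with D0 show False by (simp add: D_def)
  qed
  define b' where "b' = b - \<delta> / 2"
  define Z where "Z = {x \<in> {t0..b'}. (\<lambda>_. 0::real) x \<le> D x}"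
  have sub': "{t0..b'} \<subseteq> {a..b}" using t0 \<delta>(1) by (auto simp: b'_def)
  have "closed Z" unfolding Z_def
    by (intro continuous_on_closed_Collect_le continuous_on_const continuous_on_subset[OF contD sub']) auto
  moreover have "Z \<noteq> {}" using t0le \<delta>(1) D0 by (auto simp: Z_def b'_def D_def intro!: exI[of _ t0])
  moreover have "bdd_above Z" unfolding Z_def by (auto intro!: bdd_aboveI[of _ b'])
  ultimately have tsZ: "Sup Z \<in> Z" by (intro closed_contains_Sup)
  define ts where "ts = Sup Z"
  have ts: "ts \<in> {t0..b'}" "0 \<le> D ts" using tsZ by (auto simp: Z_def ts_def)
  have tsb: "ts < b" using ts \<delta>(1) by (auto simp: b'_def)
  have ts_ab: "ts \<in> {a..b}" using ts sub' by auto
  have after: "D s < 0" if "ts < s" "s < b" for s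
  proof (cases "s \<le> b'")
    case True
    have "s \<notin> Z"
    proof
      assume "s \<in> Z"
      then have "s \<le> Sup Z" using \<open>bdd_above Z\<close> by (rule cSup_upper)
      with that show False by (simp add: ts_def)
    qed
    then show ?thesis using True that ts by (auto simp: Z_def)
  next
    case False
    then show ?thesis using neg_near[of s] that ts ts_ab by (auto simp: b'_def)
  qed
  have Dts: "D ts = 0"
  proof (rule ccontr)
    assume "D ts \<noteq> 0"
    then have pos: "D ts > 0" using ts by simp
    define s where "s = (ts + b) / 2"
    have s: "ts < s" "s < b" using tsb by (auto simp: s_def)
    have "D s < 0" using after s by blast
    have "\<exists>x. ts \<le> x \<and> x \<le> s \<and> D x = 0"
    proof (rule IVT2')
      show "D s \<le> 0" using \<open>D s < 0\<close> by simp
      show "0 \<le> D ts" using pos by simp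
      show "ts \<le> s" using s by simp
      have "{ts..s} \<subseteq> {a..b}" using ts_ab s by auto
      then show "continuous_on {ts..s} D" by (rule continuous_on_subset[OF contD])
    qed
    then obtain x where x: "ts \<le> x" "x \<le> s" "D x = 0" by blast
    then have "x \<noteq> ts" using pos by auto
    then have "D x < 0" using after[of x] x s by auto
    with x show False by simp
  qed
  obtain l2 where l2: "l2 > 0" "(D has_real_derivative l2) (at ts within {a..b})"
    using dD[OF ts_ab Dts] by auto
  from has_real_derivative_pos_inc_right[OF l2(2) l2(1)] obtain e where
    e: "e > 0" "\<And>h. h > 0 \<Longrightarrow> ts + h \<in> {a..b} \<Longrightarrow> h < e \<Longrightarrow> D ts < D (ts + h)" by blast
  define h where "h = min e (b - ts) / 2"
  have h: "h > 0" "h < e" "ts + h < b" using e(1) tsb unfolding h_def by (auto simp: min_def field_simps)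
  have "D ts < D (ts + h)" using e(2)[OF h(1) _ h(2)] h ts_ab by auto
  moreover have "D (ts + h) < 0" using after[of "ts + h"] h by auto
  ultimately show False using Dts by simp
qed



lemma ode_exists:
  fixes G :: "real \<Rightarrow> real \<Rightarrow> real"
  assumes ab: "a \<le> b"
    and cont: "continuous_on UNIV (\<lambda>q. G (fst q) (snd q))"
    and lip: "\<And>t r s. \<bar>G t r - G t s\<bar> \<le> L * \<bar>r - s\<bar>"
  shows "\<exists>y. y b = y0 \<and> (\<forall>t\<in>{a..b}. (y has_real_derivative G t (y t)) (at t within {a..b}))"
proof -
  define L' where "L' = \<bar>L\<bar>"
  have L': "L' \<ge> 0" "\<And>t r s. \<bar>G t r - G t s\<bar> \<le> L' * \<bar>r - s\<bar>"
  proof -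
    show "L' \<ge> 0" by (simp add: L'_def)
    fix t r s
    have "L * \<bar>r - s\<bar> \<le> \<bar>L\<bar> * \<bar>r - s\<bar>" by (intro mult_right_mono) auto
    then show "\<bar>G t r - G t s\<bar> \<le> L' * \<bar>r - s\<bar>" using lip[of t r s] by (simp add: L'_def)
  qed
  define lam where "lam = 2 * L' + 1"
  have lam: "lam > 0" using L' by (simp add: lam_def)
  define w where "w t = exp (lam * (b - t))" for t
  have wpos: "w t > 0" for t by (simp add: w_def)
  have w1: "w t \<ge> 1" if "t \<le> b" for t using that lam by (simp add: w_def)
  have contw: "continuous_on S w" for S unfolding w_def by (intro continuous_intros)
  define phi where "phi u s = G s (apply_bcontfun u s * w s)" for u s
  have contphi: "continuous_on S (phi u)" for u S
  proof -
    have cu: "continuous_on S (apply_bcontfun u)" by simp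
    have "continuous_on S (\<lambda>s. (s, apply_bcontfun u s * w s))"
      by (intro continuous_intros contw cu)
    then have "continuous_on S ((\<lambda>q. G (fst q) (snd q)) \<circ> (\<lambda>s. (s, apply_bcontfun u s * w s)))"
      by (rule continuous_on_compose) (rule continuous_on_subset[OF cont], simp)
    then show ?thesis by (simp add: phi_def o_def)
  qed
  have intphi: "phi u integrable_on {t..b}" for u t
    by (rule integrable_continuous_interval[OF contphi])
  define qf where "qf u t = (y0 - integral {t..b} (phi u)) / w t" for u t
  have contqf: "continuous_on {a..b} (qf u)" for u
  proof -
    have "continuous_on {a..b} (\<lambda>t. integral {t..b} (phi u))"
      by (rule DERIV_continuous_on[OF integral_has_real_derivative'[OF contphi]])
    then show ?thesis unfolding qf_def
      by (intro continuous_intros contw) (auto simp: wpos less_imp_neq[symmetric])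
  qed
  have exQ: "\<exists>g::real \<Rightarrow>\<^sub>C real. \<forall>x. apply_bcontfun g x = qf u (clamp a b x)" for u
  proof -
    from contqf[of u] have "continuous_on (cbox a b) (qf u)" by simp
    from continuous_on_cbox_bcontfunE[OF this] obtain g :: "real \<Rightarrow>\<^sub>C real"
      where "\<And>x. apply_bcontfun g x = qf u (clamp a b x)" by metis
    then show ?thesis by blast
  qed
  define Q where "Q u = (SOME g::real \<Rightarrow>\<^sub>C real. \<forall>x. apply_bcontfun g x = qf u (clamp a b x))" for u
  have Q: "apply_bcontfun (Q u) x = qf u (clamp a b x)" for u x
    unfolding Q_def using someI_ex[OF exQ[of u]] by blast
  have clampab: "clamp a b x \<in> {a..b}" for x :: real
    using clamp_in_interval[of a b x] ab by auto
  have clampid: "clamp a b x = x" if "x \<in> {a..b}" for x :: real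
    using that by (simp add: clamp_cancel_cbox[of x a b, simplified])
  have intw: "integral {t..b} w = (w t - 1) / lam" if "t \<le> b" for t
  proof -
    have "(w has_integral ((- w b / lam) - (- w t / lam))) {t..b}"
    proof (rule fundamental_theorem_of_calculus[OF that])
      fix x assume "x \<in> {t..b}"
      show "((\<lambda>s. - w s / lam) has_vector_derivative w x) (at x within {t..b})"
        unfolding w_def has_real_derivative_iff_has_vector_derivative[symmetric]
        by (rule derivative_eq_intros refl | simp add: lam less_imp_neq[symmetric])+
    qed
    then show ?thesis by (simp add: integral_unique w_def diff_divide_distrib)
  qed
  have contr: "dist (Q u1) (Q u2) \<le> (1/2) * dist u1 u2" for u1 u2
  proof (rule dist_bound)
    fix x
    define t where "t = clamp a b x"
    have t: "t \<in> {a..b}" using clampab by (simp add: t_def)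
    define D where "D = dist u1 u2"
    have D: "D \<ge> 0" by (simp add: D_def)
    have pt: "\<bar>phi u1 s - phi u2 s\<bar> \<le> L' * D * w s" for s
    proof -
      have "\<bar>phi u1 s - phi u2 s\<bar> \<le> L' * \<bar>apply_bcontfun u1 s * w s - apply_bcontfun u2 s * w s\<bar>"
        unfolding phi_def by (rule L'(2))
      also have "\<dots> = L' * (\<bar>apply_bcontfun u1 s - apply_bcontfun u2 s\<bar> * w s)"
        using wpos[of s] by (simp add: left_diff_distrib[symmetric] abs_mult)
      also have "\<dots> \<le> L' * (D * w s)"
        using dist_bounded[of u1 s u2] wpos[of s] L'(1)
        by (intro mult_left_mono mult_right_mono) (auto simp: D_def dist_real_def)
      finally show ?thesis by simp
    qed
    have "\<bar>integral {t..b} (phi u1) - integral {t..b} (phi u2)\<bar>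
        = norm (integral {t..b} (\<lambda>s. phi u1 s - phi u2 s))"
      by (simp add: integral_diff[OF intphi intphi])
    also have "\<dots> \<le> integral {t..b} (\<lambda>s. L' * D * w s)"
      by (rule integral_norm_bound_integral)
        (auto intro!: integrable_diff intphi integrable_continuous_interval continuous_intros contw pt contphi)
    also have "\<dots> = L' * D * ((w t - 1) / lam)"
      using intw[of t] t by simp
    also have "\<dots> \<le> L' * D * (w t / lam)"
      using L'(1) D lam by (intro mult_left_mono divide_right_mono) auto
    finally have I: "\<bar>integral {t..b} (phi u1) - integral {t..b} (phi u2)\<bar> \<le> L' * D * (w t / lam)" .
    have "dist (apply_bcontfun (Q u1) x) (apply_bcontfun (Q u2) x) = \<bar>qf u1 t - qf u2 t\<bar>"
      by (simp add: Q t_def dist_real_def)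
    also have "\<dots> = \<bar>integral {t..b} (phi u1) - integral {t..b} (phi u2)\<bar> / w t"
      unfolding qf_def using wpos[of t]
      by (simp add: diff_divide_distrib[symmetric] abs_minus_commute)
    also have "\<dots> \<le> L' * D * (w t / lam) / w t"
      using I wpos[of t] by (intro divide_right_mono) auto
    also have "\<dots> = L' / lam * D"
      using wpos[of t] by (simp add: field_simps)
    also have "\<dots> \<le> (1/2) * D"
      using L'(1) lam D by (intro mult_right_mono) (auto simp: lam_def field_simps)
    finally show "dist (apply_bcontfun (Q u1) x) (apply_bcontfun (Q u2) x) \<le> (1/2) * dist u1 u2"
      by (simp add: D_def)
  qed
  obtain u where u: "Q u = u"
    using banach_fix_type[of "1/2" Q] contr by auto
  define y where "y t = apply_bcontfun u t * w t" for t
  have phiy: "phi u = (\<lambda>s. G s (y s))" by (simp add: phi_def y_def fun_eq_iff)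
  have yeq: "y t = y0 - integral {t..b} (\<lambda>s. G s (y s))" if t: "t \<in> {a..b}" for t
  proof -
    have "apply_bcontfun u t = qf u t"
      using Q[of u t] u clampid[OF t] by simp
    then have "y t = y0 - integral {t..b} (phi u)"
      using wpos[of t] by (simp add: y_def qf_def)
    then show ?thesis by (simp add: phiy)
  qed
  show ?thesis
  proof (intro exI conjI ballI)
    show "y b = y0" using yeq[of b] ab by simp
    fix t assume t: "t \<in> {a..b}"
    have "((\<lambda>t. y0 - integral {t..b} (phi u)) has_real_derivative (0 - - phi u t)) (at t within {a..b})"
      by (intro derivative_intros integral_has_real_derivative'[OF contphi t])
    then have "((\<lambda>t. y0 - integral {t..b} (\<lambda>s. G s (y s))) has_real_derivative G t (y t)) (at t within {a..b})"
      by (simp add: phiy)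
    then show "(y has_real_derivative G t (y t)) (at t within {a..b})"
      by (rule has_field_derivative_transform_within[of _ _ _ _ 1]) (use t yeq in auto)
  qed
qed



context
  fixes A f :: "real \<Rightarrow> real \<Rightarrow> real" and p :: "real \<Rightarrow> real" and c v0 :: real
    and S :: "(real \<times> real) set"
  assumes c_pos: "c > 0" and S_half: "{q. snd q \<ge> 0} \<subseteq> S"
    and Gcont: "continuous_on S (\<lambda>q. A (fst q) (snd q) * f (fst q) (snd q) / 2)"
    and Glip: "\<And>a b m M. {a..b} \<times> {m..M} \<subseteq> S \<Longrightarrow> \<exists>L. \<forall>t\<in>{a..b}. \<forall>r\<in>{m..M}. \<forall>s\<in>{m..M}.
        \<bar>A t r * f t r / 2 - A t s * f t s / 2\<bar> \<le> L * \<bar>r - s\<bar>"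
    and fc: "\<And>t. f t c = 0"
    and fp: "\<And>t. f t (p t) = 0"
    and dp: "\<And>t. \<exists>d. (p has_real_derivative d) (at t) \<and> d < 0"
    and pc: "\<And>t. c < p t"
begin

lemma p_le: "v0 \<le> t \<Longrightarrow> p t \<le> p v0"
  using DERIV_neg_imp_decreasing[of v0 t p] dp by (cases "v0 = t") force+

lemma p_lt: "v0 < t \<Longrightarrow> p t < p v0"
  using DERIV_neg_imp_decreasing[of v0 t p] dp by force

lemma above_c:
  fixes \<gamma> :: "real \<Rightarrow> real"
  assumes av: "a \<le> v"
    and d: "\<And>t. t \<in> {a..v} \<Longrightarrow> (\<gamma> has_real_derivative (A t (\<gamma> t) * f t (\<gamma> t) / 2)) (at t within {a..v})"
    and nn: "\<And>t. t \<in> {a..v} \<Longrightarrow> 0 \<le> \<gamma> t"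
    and gv: "c < \<gamma> v"
    and t: "t \<in> {a..v}"
  shows "c < \<gamma> t"
proof -
  have cont: "continuous_on {a..v} \<gamma>" using d by (rule DERIV_continuous_on)
  have "compact (\<gamma> ` {a..v})" by (rule compact_continuous_image[OF cont compact_Icc])
  then obtain B where B: "\<And>x. x \<in> {a..v} \<Longrightarrow> \<bar>\<gamma> x\<bar> \<le> B"
    by (rule compact_bound) blast
  define M where "M = max B c"
  have "{a..v} \<times> {0..M} \<subseteq> S" using S_half by auto
  from Glip[OF this] obtain L where L: "\<forall>t\<in>{a..v}. \<forall>r\<in>{0..M}. \<forall>s\<in>{0..M}.
        \<bar>A t r * f t r / 2 - A t s * f t s / 2\<bar> \<le> L * \<bar>r - s\<bar>" by blast
  have noc: "\<gamma> t1 \<noteq> c" if t1: "t1 \<in> {a..v}" for t1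
  proof
    assume eq: "\<gamma> t1 = c"
    have dc: "((\<lambda>_. c) has_real_derivative (A t c * f t c / 2)) (at t within {a..v})" for t
      using fc[of t] by (simp add: DERIV_const)
    have inI: "\<gamma> t \<in> {0..M}" if "t \<in> {a..v}" for t using nn[OF that] B[OF that] by (auto simp: M_def)
    have cI: "c \<in> {0..M}" using c_pos by (auto simp: M_def)
    have "\<gamma> v = (\<lambda>_. c) v"
      by (rule ode_unique[where ya = \<gamma> and yb = "\<lambda>_. c" and G = "\<lambda>t r. A t r * f t r / 2" and I = "{0..M}" and L = L and tt = t1])
        (use d dc inI cI L t1 eq av in auto)
    with gv show False by simp
  qed
  show ?thesis
  proof (rule ccontr)
    assume "\<not> c < \<gamma> t"
    then have "\<gamma> t \<le> c" by simp
    moreover have "{t..v} \<subseteq> {a..v}" using t by auto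
    ultimately obtain x where "t \<le> x" "x \<le> v" "\<gamma> x = c"
      using IVT'[of \<gamma> t c v] gv t continuous_on_subset[OF cont] by auto
    with noc[of x] t show False by auto
  qed
qed

definition sol :: "real \<Rightarrow> (real \<Rightarrow> real) \<Rightarrow> bool" where
  "sol v \<gamma> \<longleftrightarrow> (\<forall>t\<in>{v0..v}. (\<gamma> has_real_derivative (A t (\<gamma> t) * f t (\<gamma> t) / 2)) (at t within {v0..v}))
     \<and> \<gamma> v = p v \<and> (\<forall>t\<in>{v0..v}. 0 \<le> \<gamma> t)"

lemma sol_bounds:
  assumes v: "v0 \<le> v" and s: "sol v \<gamma>" and t: "t \<in> {v0..v}"
  shows "c < \<gamma> t" "\<gamma> t \<le> p t" "t < v \<Longrightarrow> \<gamma> t < p t"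
proof -
  show "c < \<gamma> t"
    using above_c[OF v _ _ _ t] s pc[of v] unfolding sol_def by auto
  show lt: "t < v \<Longrightarrow> \<gamma> t < p t"
    using below_curve[of v0 v \<gamma> "\<lambda>t r. A t r * f t r / 2" p t] s dp fp t unfolding sol_def by auto
  show "\<gamma> t \<le> p t"
    using lt s t unfolding sol_def by (cases "t < v") auto
qed

lemma sol_unique:
  assumes v: "v0 \<le> v" and s1: "sol v \<gamma>1" and s2: "sol v \<gamma>2" and t: "t \<in> {v0..v}"
  shows "\<gamma>1 t = \<gamma>2 t"
proof -
  have "{v0..v} \<times> {0..p v0} \<subseteq> S" using S_half by auto
  from Glip[OF this] obtain L where L: "\<forall>t\<in>{v0..v}. \<forall>r\<in>{0..p v0}. \<forall>s\<in>{0..p v0}.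
        \<bar>A t r * f t r / 2 - A t s * f t s / 2\<bar> \<le> L * \<bar>r - s\<bar>" by blast
  have I: "\<gamma> t \<in> {0..p v0}" if "sol v \<gamma>" "t \<in> {v0..v}" for \<gamma> t
    using sol_bounds[OF v that] p_le[of t] c_pos that(2) by auto
  show ?thesis
    by (rule ode_unique[where G = "\<lambda>t r. A t r * f t r / 2" and I = "{0..p v0}" and L = L and tt = v])
      (use s1 s2 I L v t in \<open>auto simp: sol_def\<close>)
qed

lemma sol_exists:
  assumes v: "v0 \<le> v"
  shows "\<exists>\<gamma>. sol v \<gamma>"
proof -
  define R where "R = p v0"
  have cR: "c < R" using pc by (simp add: R_def)
  define cT where "cT t = max v0 (min v t)" for t
  define cR where "cR r = max c (min R r)" for r
  define H where "H t r = A (cT t) (cR r) * f (cT t) (cR r) / 2" for t r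
  have K: "{v0..v} \<times> {c..R} \<subseteq> S" using S_half c_pos by auto
  from Glip[OF K] obtain L where L: "\<forall>t\<in>{v0..v}. \<forall>r\<in>{c..R}. \<forall>s\<in>{c..R}.
        \<bar>A t r * f t r / 2 - A t s * f t s / 2\<bar> \<le> L * \<bar>r - s\<bar>" by blast
  have cTin: "cT t \<in> {v0..v}" for t using v by (auto simp: cT_def)
  have cRin: "cR r \<in> {c..R}" for r using cR by (auto simp: cR_def)
  have cRlip: "\<bar>cR r - cR s\<bar> \<le> \<bar>r - s\<bar>" for r s by (auto simp: cR_def)
  have L0: "L \<ge> 0"
  proof -
    have "\<bar>A v0 c * f v0 c / 2 - A v0 R * f v0 R / 2\<bar> \<le> L * \<bar>c - R\<bar>"
      using L v cR by (meson atLeastAtMost_iff order_refl less_imp_le)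
    then have "0 \<le> L * \<bar>c - R\<bar>" by (rule order_trans[OF abs_ge_zero])
    then show ?thesis using cR by (simp add: zero_le_mult_iff)
  qed
  have Hlip: "\<bar>H t r - H t s\<bar> \<le> L * \<bar>r - s\<bar>" for t r s
  proof -
    have "\<bar>H t r - H t s\<bar> \<le> L * \<bar>cR r - cR s\<bar>"
      unfolding H_def by (rule L[rule_format, OF cTin cRin cRin])
    also have "\<dots> \<le> L * \<bar>r - s\<bar>" by (intro mult_left_mono cRlip L0)
    finally show ?thesis .
  qed
  have Hcont: "continuous_on UNIV (\<lambda>q. H (fst q) (snd q))"
  proof -
    have c1: "continuous_on UNIV (\<lambda>q. (cT (fst q), cR (snd q)))"
      unfolding cT_def cR_def by (intro continuous_intros)
    have c2: "(\<lambda>q. (cT (fst q), cR (snd q))) ` UNIV \<subseteq> S"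
      using K cTin cRin by auto
    have "continuous_on UNIV (\<lambda>x. (\<lambda>q. A (fst q) (snd q) * f (fst q) (snd q) / 2) ((\<lambda>q. (cT (fst q), cR (snd q))) x))"
      by (rule continuous_on_compose2[OF Gcont c1 c2])
    then show ?thesis by (simp add: H_def)
  qed
  obtain y where yv: "y v = p v" and dy: "\<And>t. t \<in> {v0..v} \<Longrightarrow> (y has_real_derivative H t (y t)) (at t within {v0..v})"
    using ode_exists[OF v Hcont Hlip, of "p v"] by blast
  have Hc: "H t c = 0" for t using fc cR by (simp add: H_def cR_def)
  have noc: "y t1 \<noteq> c" if t1: "t1 \<in> {v0..v}" for t1
  proof
    assume eq: "y t1 = c"
    have "y v = (\<lambda>_. c) v"
      by (rule ode_unique[where G = H and I = UNIV and L = L and tt = t1])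
        (use dy t1 eq v Hlip Hc in \<open>auto simp: DERIV_const\<close>)
    with yv pc[of v] show False by simp
  qed
  have conty: "continuous_on {v0..v} y" using dy by (rule DERIV_continuous_on)
  have yc: "c < y t" if t: "t \<in> {v0..v}" for t
  proof (rule ccontr)
    assume "\<not> c < y t"
    then have "y t \<le> c" by simp
    moreover have "{t..v} \<subseteq> {v0..v}" using t by auto
    ultimately obtain x where "t \<le> x" "x \<le> v" "y x = c"
      using IVT'[of y t c v] yv pc[of v] t continuous_on_subset[OF conty] by auto
    with noc[of x] t show False by auto
  qed
  have yp: "y t \<le> p t" if t: "t \<in> {v0..v}" for t
  proof (cases "t < v")
    case True
    have "y t < p t"
    proof (rule below_curve[of v0 v y H p t])
      fix s assume s: "s \<in> {v0..v}" "y s = p s"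
      have "cR (p s) = p s" using pc[of s] p_le[of s] s by (auto simp: cR_def R_def)
      moreover have "cT s = s" using s by (auto simp: cT_def)
      ultimately show "H s (y s) = 0" using s fp[of s] by (simp add: H_def)
    qed (use dy dp yv t True in auto)
    then show ?thesis by simp
  qed (use yv t in auto)
  have Heq: "H t (y t) = A t (y t) * f t (y t) / 2" if t: "t \<in> {v0..v}" for t
  proof -
    have "cR (y t) = y t" using yc[OF t] yp[OF t] p_le[of t] t by (auto simp: cR_def R_def)
    moreover have "cT t = t" using t by (auto simp: cT_def)
    ultimately show ?thesis by (simp add: H_def)
  qed
  show ?thesis
  proof (intro exI[of _ y])
    have "0 \<le> y t" if "t \<in> {v0..v}" for t using yc[OF that] c_pos by linarith
    then show "sol v y" unfolding sol_def using dy Heq yv by auto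
  qed
qed


lemma sol_mono:
  assumes v: "v0 \<le> v" and vv: "v < v'" and s: "sol v \<gamma>" and s': "sol v' \<gamma>'"
  shows "\<gamma>' v0 < \<gamma> v0"
proof (rule ccontr)
  assume "\<not> \<gamma>' v0 < \<gamma> v0"
  then have ge: "\<gamma> v0 \<le> \<gamma>' v0" by simp
  have v': "v0 \<le> v'" using v vv by simp
  have sub: "{v0..v} \<subseteq> {v0..v'}" using vv by auto
  have lt: "\<gamma>' v < p v" using sol_bounds(3)[OF v' s', of v] v vv by auto
  have d: "(\<gamma> has_real_derivative (A t (\<gamma> t) * f t (\<gamma> t) / 2)) (at t within {v0..v})"
    if "t \<in> {v0..v}" for t using s that by (auto simp: sol_def)
  have d': "(\<gamma>' has_real_derivative (A t (\<gamma>' t) * f t (\<gamma>' t) / 2)) (at t within {v0..v})"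
    if "t \<in> {v0..v}" for t
    using s' that sub by (auto simp: sol_def intro: DERIV_subset[OF _ sub])
  have c1: "continuous_on {v0..v} \<gamma>" using d by (rule DERIV_continuous_on)
  have c2: "continuous_on {v0..v} \<gamma>'" using d' by (rule DERIV_continuous_on)
  have "\<exists>x. v0 \<le> x \<and> x \<le> v \<and> (\<lambda>t. \<gamma>' t - \<gamma> t) x = 0"
  proof (rule IVT2')
    show "\<gamma>' v - \<gamma> v \<le> 0" using lt s by (simp add: sol_def)
    show "0 \<le> \<gamma>' v0 - \<gamma> v0" using ge by simp
    show "v0 \<le> v" by (rule v)
    show "continuous_on {v0..v} (\<lambda>t. \<gamma>' t - \<gamma> t)" by (intro continuous_intros c1 c2)
  qed
  then obtain x where x: "x \<in> {v0..v}" "\<gamma>' x = \<gamma> x" by auto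
  have "{v0..v} \<times> {0..p v0} \<subseteq> S" using S_half by auto
  from Glip[OF this] obtain L where L: "\<forall>t\<in>{v0..v}. \<forall>r\<in>{0..p v0}. \<forall>s\<in>{0..p v0}.
        \<bar>A t r * f t r / 2 - A t s * f t s / 2\<bar> \<le> L * \<bar>r - s\<bar>" by blast
  have I: "\<gamma> t \<in> {0..p v0}" if "t \<in> {v0..v}" for t
    using sol_bounds[OF v s that] p_le[of t] c_pos that by auto
  have I': "\<gamma>' t \<in> {0..p v0}" if "t \<in> {v0..v}" for t
    using sol_bounds[OF v' s', of t] p_le[of t] c_pos that sub by auto
  have "\<gamma>' v = \<gamma> v"
    by (rule ode_unique[where ya = \<gamma>' and yb = \<gamma> and G = "\<lambda>t r. A t r * f t r / 2" and I = "{0..p v0}" and L = L and tt = x])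
      (use d d' I I' L x v in auto)
  with lt s show False by (simp add: sol_def)
qed

lemma U_sol:
  assumes v: "v0 \<le> v" and s: "sol v \<gamma>"
  shows "Ucoord A f rc v0 v (p v) = - 2 / pi * arctan (\<gamma> v0 / rc)"
  unfolding Ucoord_def
proof (rule the_equality)
  have bnd: "c < \<gamma> t" if "t \<in> {v0..v}" for t using sol_bounds(1)[OF v s that] .
  show "\<exists>\<gamma>' a. v0 \<le> a \<and> outgoing_null A f \<gamma>' a v \<and> \<gamma>' v = p v \<and>
      (\<forall>t\<in>{a<..v}. \<gamma>' t > 0) \<and>
      ((\<gamma>' a = 0 \<and> - 2 / pi * arctan (\<gamma> v0 / rc) = 2 / pi * arctan ((a - v0) / rc)) \<or>
       (a = v0 \<and> \<gamma>' v0 > 0 \<and> - 2 / pi * arctan (\<gamma> v0 / rc) = - 2 / pi * arctan (\<gamma>' v0 / rc)))"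
  proof (intro exI[of _ \<gamma>] exI[of _ v0] conjI disjI2 ballI)
    show "outgoing_null A f \<gamma> v0 v" using s v by (simp add: outgoing_null_def sol_def)
    show "\<gamma> v = p v" using s by (simp add: sol_def)
    show "\<gamma> t > 0" if "t \<in> {v0<..v}" for t using bnd[of t] that c_pos by auto
    show "\<gamma> v0 > 0" using bnd[of v0] v c_pos by auto
  qed auto
next
  fix u
  assume "\<exists>\<gamma>' a. v0 \<le> a \<and> outgoing_null A f \<gamma>' a v \<and> \<gamma>' v = p v \<and>
      (\<forall>t\<in>{a<..v}. \<gamma>' t > 0) \<and>
      ((\<gamma>' a = 0 \<and> u = 2 / pi * arctan ((a - v0) / rc)) \<or>
       (a = v0 \<and> \<gamma>' v0 > 0 \<and> u = - 2 / pi * arctan (\<gamma>' v0 / rc)))"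
  then obtain \<gamma>' a where a: "v0 \<le> a" and on: "outgoing_null A f \<gamma>' a v" and gv: "\<gamma>' v = p v"
    and pos: "\<forall>t\<in>{a<..v}. \<gamma>' t > 0"
    and cases: "(\<gamma>' a = 0 \<and> u = 2 / pi * arctan ((a - v0) / rc)) \<or>
       (a = v0 \<and> \<gamma>' v0 > 0 \<and> u = - 2 / pi * arctan (\<gamma>' v0 / rc))" by blast
  have av: "a \<le> v" and d: "\<And>t. t \<in> {a..v} \<Longrightarrow> (\<gamma>' has_real_derivative (A t (\<gamma>' t) * f t (\<gamma>' t) / 2)) (at t within {a..v})"
    using on by (auto simp: outgoing_null_def)
  have nn: "0 \<le> \<gamma>' t" if "t \<in> {a..v}" for t
  proof (cases "t = a")
    case True then show ?thesis using cases by auto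
  next
    case False
    then have "t \<in> {a<..v}" using that by auto
    then show ?thesis using pos less_imp_le by blast
  qed
  have "c < \<gamma>' a" using above_c[OF av d nn _ , of a] gv pc[of v] av by auto
  then have a0: "a = v0" and u: "u = - 2 / pi * arctan (\<gamma>' v0 / rc)" using cases c_pos by auto
  have s': "sol v \<gamma>'" unfolding sol_def using d nn gv a0 by auto
  have "\<gamma>' v0 = \<gamma> v0" using sol_unique[OF v s' s, of v0] v by auto
  then show "u = - 2 / pi * arctan (\<gamma> v0 / rc)" using u by simp
qed


lemma main_core:
  shows "\<exists>L. ((\<lambda>v. Ucoord A f c v0 v (p v)) \<longlongrightarrow> - 2 / pi * arctan (L / c)) at_top \<and> c \<le> L \<and> L < p v0"
proof -
  define \<Gamma> where "\<Gamma> v = (SOME \<gamma>. sol v \<gamma>)" for v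
  have sG: "sol v (\<Gamma> v)" if "v0 \<le> v" for v
    unfolding \<Gamma>_def using sol_exists[OF that] by (rule someI_ex)
  define \<rho> where "\<rho> v = \<Gamma> v v0" for v
  have rc: "c < \<rho> v" if "v0 \<le> v" for v
    using sol_bounds(1)[OF that sG[OF that], of v0] that by (simp add: \<rho>_def)
  have rp: "\<rho> v \<le> p v0" if "v0 \<le> v" for v
    using sol_bounds(2)[OF that sG[OF that], of v0] that by (simp add: \<rho>_def)
  have rmono: "\<rho> v' < \<rho> v" if "v0 \<le> v" "v < v'" for v v'
    using sol_mono[OF that sG[OF that(1)] sG] that by (simp add: \<rho>_def)
  have rmono': "\<rho> v' \<le> \<rho> v" if "v0 \<le> v" "v \<le> v'" for v v'
    using rmono[OF that(1)] that by (cases "v = v'") (auto intro: less_imp_le)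
  have U: "Ucoord A f c v0 v (p v) = - 2 / pi * arctan (\<rho> v / c)" if "v0 \<le> v" for v
    using U_sol[OF that sG[OF that]] by (simp add: \<rho>_def)
  define L where "L = Inf (\<rho> ` {v0..})"
  have ne: "\<rho> ` {v0..} \<noteq> {}" by auto
  have bdd: "bdd_below (\<rho> ` {v0..})" using rc by (auto intro!: bdd_belowI[of _ c] less_imp_le)
  have cL: "c \<le> L" unfolding L_def using rc by (intro cInf_greatest[OF ne]) (auto intro: less_imp_le)
  have Lle: "L \<le> \<rho> v" if "v0 \<le> v" for v unfolding L_def using that bdd by (intro cInf_lower) auto
  have Lp: "L < p v0"
    using Lle[of "v0 + 1"] rmono[of v0 "v0 + 1"] rp[of v0] by auto
  have lim: "(\<rho> \<longlongrightarrow> L) at_top"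
  proof (rule tendstoI)
    fix e :: real assume e: "e > 0"
    have "L < L + e" using e by simp
    then obtain x where x: "x \<in> \<rho> ` {v0..}" "x < L + e"
      using cInf_lessD[OF ne] unfolding L_def by blast
    then obtain v1 where v1: "v0 \<le> v1" "\<rho> v1 < L + e" by auto
    show "eventually (\<lambda>v. dist (\<rho> v) L < e) at_top"
      unfolding eventually_at_top_linorder
    proof (intro exI[of _ v1] allI impI)
      fix v assume "v \<ge> v1"
      then have "L \<le> \<rho> v" "\<rho> v \<le> \<rho> v1" using Lle[of v] rmono'[OF v1(1), of v] v1 by auto
      then show "dist (\<rho> v) L < e" using v1 by (simp add: dist_real_def)
    qed
  qed
  have T: "((\<lambda>v. - 2 / pi * arctan (\<rho> v / c)) \<longlongrightarrow> - 2 / pi * arctan (L / c)) at_top"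
    using c_pos by (intro tendsto_intros lim) auto
  have ev: "eventually (\<lambda>v. - 2 / pi * arctan (\<rho> v / c) = Ucoord A f c v0 v (p v)) at_top"
    unfolding eventually_at_top_linorder by (intro exI[of _ v0]) (simp add: U)
  have "((\<lambda>v. Ucoord A f c v0 v (p v)) \<longlongrightarrow> - 2 / pi * arctan (L / c)) at_top"
    using T unfolding tendsto_cong[OF ev] .
  then show ?thesis using cL Lp by blast
qed

end

lemma U_v0:
  assumes r: "r > 0"
  shows "Ucoord A f rc v0 v0 r = - 2 / pi * arctan (r / rc)"
  unfolding Ucoord_def
proof (rule the_equality)
  have bot: "at v0 within {v0..v0} = bot" by (simp add: at_within_def)
  show "\<exists>\<gamma>' a. v0 \<le> a \<and> outgoing_null A f \<gamma>' a v0 \<and> \<gamma>' v0 = r \<and>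
      (\<forall>t\<in>{a<..v0}. \<gamma>' t > 0) \<and>
      ((\<gamma>' a = 0 \<and> - 2 / pi * arctan (r / rc) = 2 / pi * arctan ((a - v0) / rc)) \<or>
       (a = v0 \<and> \<gamma>' v0 > 0 \<and> - 2 / pi * arctan (r / rc) = - 2 / pi * arctan (\<gamma>' v0 / rc)))"
    by (intro exI[of _ "\<lambda>_. r"] exI[of _ v0]) (use r bot in \<open>auto simp: outgoing_null_def\<close>)
next
  fix u
  assume "\<exists>\<gamma>' a. v0 \<le> a \<and> outgoing_null A f \<gamma>' a v0 \<and> \<gamma>' v0 = r \<and>
      (\<forall>t\<in>{a<..v0}. \<gamma>' t > 0) \<and>
      ((\<gamma>' a = 0 \<and> u = 2 / pi * arctan ((a - v0) / rc)) \<or>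
       (a = v0 \<and> \<gamma>' v0 > 0 \<and> u = - 2 / pi * arctan (\<gamma>' v0 / rc)))"
  then show "u = - 2 / pi * arctan (r / rc)" using r by (auto simp: outgoing_null_def)
qed



theorem theorem1:
  fixes A F :: "real \<Rightarrow> real \<Rightarrow> real" and rp rm :: "real \<Rightarrow> real" and rc v0 :: real
  assumes regular: "\<exists>S. open S \<and> {p. snd p \<ge> 0} \<subseteq> S \<and> C1_on2 A S \<and> C1_on2 F S"
    and A_pos: "\<And>v r. r \<ge> 0 \<Longrightarrow> A v r > 0"
    and F_pos: "\<And>v r. r \<ge> 0 \<Longrightarrow> F v r > 0"
    and roots: "\<And>v. 0 < rm v \<and> rm v < rp v"
    and f_centre: "\<And>v. f_of F rp rm v 0 = 1"
    and df_centre: "\<And>v. ((\<lambda>r. f_of F rp rm v r) has_real_derivative 0) (at 0)"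
    and dA_centre: "\<And>v. ((\<lambda>r. A v r) has_real_derivative 0) (at 0)"
    and f_infty: "\<And>v. ((\<lambda>r. f_of F rp rm v r) \<longlongrightarrow> 1) at_top"
    and A_infty: "\<And>v. ((\<lambda>r. A v r) \<longlongrightarrow> 1) at_top"
    and rp_decr: "\<And>v. \<exists>d. (rp has_real_derivative d) (at v) \<and> d < 0"
    and rp_lim: "(rp \<longlongrightarrow> rc) at_top"
    and rm_lim: "(rm \<longlongrightarrow> rc) at_top"
    and case1: "\<And>v. (rm has_real_derivative 0) (at v)"
    and limits_analytic: "\<exists>Ainf Finf. (\<forall>r>0. ((\<lambda>v. A v r) \<longlongrightarrow> Ainf r) at_top
          \<and> ((\<lambda>v. F v r) \<longlongrightarrow> Finf r) at_top)
        \<and> real_analytic_on Ainf {0<..} \<and> real_analytic_on Finf {0<..}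
        \<and> real_analytic_on (\<lambda>r. Ainf r * Finf r) {0<..}"
    and h_smooth: "\<And>n v r. r > 0 \<Longrightarrow> (deriv ^^ n) (\<lambda>\<rho>. A v \<rho> * F v \<rho>) differentiable (at r)"
    and h_derivs_conv: "\<And>n r. r > 0 \<Longrightarrow>
        (\<exists>L. ((\<lambda>v. (deriv ^^ n) (\<lambda>\<rho>. A v \<rho> * F v \<rho>) r) \<longlongrightarrow> L) at_top)"
  shows "\<exists>Uinf.
     ((\<lambda>v. Ucoord A (f_of F rp rm) rc v0 v (rp v)) \<longlongrightarrow> Uinf) at_top \<and>
     -1 < Ucoord A (f_of F rp rm) rc v0 v0 (rp v0) \<and>
     Ucoord A (f_of F rp rm) rc v0 v0 (rp v0) < Uinf \<and>
     Uinf \<le> Ucoord A (f_of F rp rm) rc v0 v0 (rm v0) \<and>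
     Ucoord A (f_of F rp rm) rc v0 v0 (rm v0) < 1 \<and>
     (Uinf = Ucoord A (f_of F rp rm) rc v0 v0 (rm v0) \<or>
      Uinf < Ucoord A (f_of F rp rm) rc v0 v0 (rm v0))"
proof -
  obtain S where S: "open S" "{p. snd p \<ge> 0} \<subseteq> S" "C1_on2 A S" "C1_on2 F S"
    using regular by blast
  define c where "c = rm v0"
  have rmc: "rm v = c" for v
    unfolding c_def by (rule DERIV_isconst_all) (use case1 in blast)
  have rmfun: "rm = (\<lambda>_. c)" using rmc by (simp add: fun_eq_iff)
  have rcc: "rc = c"
  proof -
    have "((\<lambda>_::real. c) \<longlongrightarrow> rc) at_top" using rm_lim by (simp add: rmfun)
    moreover have "((\<lambda>_::real. c) \<longlongrightarrow> c) at_top" by (rule tendsto_const)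
    ultimately show ?thesis by (rule tendsto_unique[OF trivial_limit_at_top_linorder])
  qed
  have c_pos: "c > 0" using roots[of v0] by (simp add: c_def)
  have pc: "\<And>t. c < rp t" using roots rmc by metis
  have fc: "\<And>t. f_of F rp rm t c = 0" by (simp add: f_of_def rmc)
  have fp: "\<And>t. f_of F rp rm t (rp t) = 0" by (simp add: f_of_def)
  have drp: "\<And>t. \<exists>d. (rp has_real_derivative d) (at t)" using rp_decr by blast
  have drm: "\<And>t. \<exists>d. (rm has_real_derivative d) (at t)" using case1 by blast
  have Gcont: "continuous_on S (\<lambda>q. A (fst q) (snd q) * f_of F rp rm (fst q) (snd q) / 2)"
    unfolding f_of_def
    by (intro continuous_intros C1_cont[OF S(3)] C1_cont[OF S(4)] deriv_cont_fst[OF drp] deriv_cont_fst[OF drm]) auto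
  have Glip: "\<exists>L. \<forall>t\<in>{a..b}. \<forall>r\<in>{m..M}. \<forall>s\<in>{m..M}.
        \<bar>A t r * f_of F rp rm t r / 2 - A t s * f_of F rp rm t s / 2\<bar> \<le> L * \<bar>r - s\<bar>"
    if K: "{a..b} \<times> {m..M} \<subseteq> S" for a b m M
  proof -
    have "LB (\<lambda>t r. F t r * (r - rp t) * (r - rm t)) a b m M"
      by (intro LB_mult LB_C1[OF S(4) K] LB_lin deriv_cont[OF drp] deriv_cont[OF drm])
    then have "LB (\<lambda>t r. A t r * (F t r * (r - rp t) * (r - rm t))) a b m M"
      by (rule LB_mult[OF LB_C1[OF S(3) K]])
    then have "LB (\<lambda>t r. A t r * (F t r * (r - rp t) * (r - rm t)) / 2) a b m M"
      by (rule LB_div2)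
    then show ?thesis unfolding LB_def f_of_def by blast
  qed
  obtain L where L: "((\<lambda>v. Ucoord A (f_of F rp rm) c v0 v (rp v)) \<longlongrightarrow> - 2 / pi * arctan (L / c)) at_top"
    "c \<le> L" "L < rp v0"
    using main_core[of c S A "f_of F rp rm" rp v0, OF c_pos S(2) Gcont Glip fc fp rp_decr pc] by blast
  have U0p: "Ucoord A (f_of F rp rm) rc v0 v0 (rp v0) = - 2 / pi * arctan (rp v0 / c)"
    using U_v0[of "rp v0"] pc[of v0] c_pos rcc by simp
  have U0m: "Ucoord A (f_of F rp rm) rc v0 v0 (rm v0) = - 2 / pi * arctan (c / c)"
    using U_v0[of "rm v0"] c_pos rcc rmc by simp
  have k: "2 / pi > (0::real)" by simp
  have a1: "arctan (rp v0 / c) < pi / 2" by (rule arctan_ubound)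
  have a2: "arctan (L / c) < arctan (rp v0 / c)"
    using L(3) c_pos by (simp add: arctan_less_iff divide_strict_right_mono)
  have a3: "arctan 1 \<le> arctan (L / c)"
  proof -
    have "1 \<le> L / c" using L(2) c_pos by simp
    then show ?thesis by (rule arctan_le_iff[THEN iffD2])
  qed
  have cc: "c / c = 1" using c_pos by simp
  show ?thesis
  proof (intro exI[of _ "- 2 / pi * arctan (L / c)"] conjI)
    show "((\<lambda>v. Ucoord A (f_of F rp rm) rc v0 v (rp v)) \<longlongrightarrow> - 2 / pi * arctan (L / c)) at_top"
      using L(1) rcc by simp
    show "-1 < Ucoord A (f_of F rp rm) rc v0 v0 (rp v0)"
      unfolding U0p using a1 by (simp add: field_simps)
    show "Ucoord A (f_of F rp rm) rc v0 v0 (rp v0) < - 2 / pi * arctan (L / c)"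
      unfolding U0p using a2 k by (simp add: field_simps)
    show "- 2 / pi * arctan (L / c) \<le> Ucoord A (f_of F rp rm) rc v0 v0 (rm v0)"
      unfolding U0m cc using a3 k by (simp add: field_simps)
    show "Ucoord A (f_of F rp rm) rc v0 v0 (rm v0) < 1"
      unfolding U0m cc by (simp add: arctan_one)
    show "- 2 / pi * arctan (L / c) = Ucoord A (f_of F rp rm) rc v0 v0 (rm v0) \<or>
      - 2 / pi * arctan (L / c) < Ucoord A (f_of F rp rm) rc v0 v0 (rm v0)"
      unfolding U0m cc using a3 k by (auto simp: field_simps)
  qed
qed


end
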